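(* Let $(\mathbb{E}_{s,t}[\cdot])_{0\le s\le t<\infty}$ be an $\mathcal{F}_t$-consistent pricing mechanism (satisfying (A1)–(A4) below). Let $0\le t_0<t_1<\cdots<t_N$ and $K_t=\sum_{i=0}^{N-1}\xi_i1_{[t_i,t_{i+1})}(t)$ with $\xi_i\in L^2(\mathcal{F}_{t_i})$. For $0\le i\le N-1$, $t_i\le s\le t\le t_{i+1}$ and $X\in L^2(\mathcal{F}_t)$, define $\mathbb{E}^i_{s,t}[X;K]:=\mathbb{E}_{s,t}[X+K_t-K_s]$. Then for each $i=0,1,\dots,N-1$, the family $(\mathbb{E}^i_{s,t}[\cdot;K])_{t_i\le s\le t\le t_{i+1}}$ is an $\mathcal{F}_t$-consistent pricing mechanism on $[t_i,t_{i+1}]$.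
   Context: $(\Omega,\mathcal{F},P)$ carries a $d$-dimensional Brownian motion $B$, $\mathcal{F}_t=\sigma\{B_s:s\le t\}$; $L^2(\mathcal{F}_t)$: real square-integrable $\mathcal{F}_t$-measurable random variables. A family of operators $\mathbb{E}_{s,t}:L^2(\mathcal{F}_t)\to L^2(\mathcal{F}_s)$, $T_0\le s\le t\le T_1$, is an $\mathcal{F}_t$-consistent pricing mechanism on $[T_0,T_1]$ if for all $T_0\le s\le t\le T_1$ and $X,X'\in L^2(\mathcal{F}_t)$: (A1) $X\ge X'$ a.s. implies $\mathbb{E}_{s,t}[X]\ge\mathbb{E}_{s,t}[X']$ a.s.; (A2) $\mathbb{E}_{t,t}[X]=X$; (A3) $\mathbb{E}_{r,s}[\mathbb{E}_{s,t}[X]]=\mathbb{E}_{r,t}[X]$ for $T_0\le r\le s$; (A4) $1_A\mathbb{E}_{s,t}[X]=1_A\mathbb{E}_{s,t}[1_AX]$ a.s. for all $A\in\mathcal{F}_s$. *)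

theory Defs
  imports "HOL-Probability.Probability"
begin

text \<open>Natural filtration of a process B: F_t = sigma{B_r : 0 <= r <= t}, as a measure
  on the sample space of M (sigma-algebra only matters).\<close>
definition nat_filtration :: "'a measure \<Rightarrow> (real \<Rightarrow> 'a \<Rightarrow> 'b::topological_space) \<Rightarrow> real \<Rightarrow> 'a measure" where
  "nat_filtration M B t =
     sigma (space M) {B r -` A \<inter> space M | r A. 0 \<le> r \<and> r \<le> t \<and> A \<in> sets borel}"

definition brownian_motion :: "'a measure \<Rightarrow> (real \<Rightarrow> 'a \<Rightarrow> real ^ 'd) \<Rightarrow> bool" where
  "brownian_motion M B \<longleftrightarrow>
     prob_space M \<and>
     (\<forall>t\<ge>0. B t \<in> borel_measurable M) \<and>
     (AE \<omega> in M. B 0 \<omega> = 0) \<and>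
     (AE \<omega> in M. continuous_on {0..} (\<lambda>t. B t \<omega>)) \<and>
     (\<forall>s t. 0 \<le> s \<and> s < t \<longrightarrow>
        distributed M lborel (\<lambda>\<omega>. B t \<omega> - B s \<omega>)
          (\<lambda>x. ennreal (\<Prod>j\<in>UNIV. normal_density 0 (sqrt (t - s)) (x $ j))) \<and>
        (\<forall>A \<in> sets (nat_filtration M B s). \<forall>C \<in> sets (borel :: (real ^ 'd) measure).
           measure M (A \<inter> ((\<lambda>\<omega>. B t \<omega> - B s \<omega>) -` C \<inter> space M))
             = measure M A * measure M ((\<lambda>\<omega>. B t \<omega> - B s \<omega>) -` C \<inter> space M)))"

definition L2 :: "'a measure \<Rightarrow> 'a measure \<Rightarrow> ('a \<Rightarrow> real) set" where
  "L2 M G = {X. X \<in> borel_measurable G \<and> integrable M (\<lambda>\<omega>. (X \<omega>)\<^sup>2)}"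

text \<open>F-consistent pricing mechanism on the time set I (an interval):
  E s t maps L2(F t) to L2(F s) for s <= t in I, with axioms (A1)-(A4); equalities and
  inequalities hold almost surely.\<close>
definition consistent_pricing ::
  "'a measure \<Rightarrow> (real \<Rightarrow> 'a measure) \<Rightarrow> real set \<Rightarrow> (real \<Rightarrow> real \<Rightarrow> ('a \<Rightarrow> real) \<Rightarrow> 'a \<Rightarrow> real) \<Rightarrow> bool" where
  "consistent_pricing M F I E \<longleftrightarrow>
     (\<forall>s\<in>I. \<forall>t\<in>I. \<forall>X. s \<le> t \<and> X \<in> L2 M (F t) \<longrightarrow> E s t X \<in> L2 M (F s)) \<and>
     (\<forall>s\<in>I. \<forall>t\<in>I. \<forall>X X'. s \<le> t \<and> X \<in> L2 M (F t) \<and> X' \<in> L2 M (F t) \<and>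
        (AE \<omega> in M. X \<omega> \<ge> X' \<omega>) \<longrightarrow> (AE \<omega> in M. E s t X \<omega> \<ge> E s t X' \<omega>)) \<and>
     (\<forall>t\<in>I. \<forall>X. X \<in> L2 M (F t) \<longrightarrow> (AE \<omega> in M. E t t X \<omega> = X \<omega>)) \<and>
     (\<forall>r\<in>I. \<forall>s\<in>I. \<forall>t\<in>I. \<forall>X. r \<le> s \<and> s \<le> t \<and> X \<in> L2 M (F t) \<longrightarrow>
        (AE \<omega> in M. E r s (E s t X) \<omega> = E r t X \<omega>)) \<and>
     (\<forall>s\<in>I. \<forall>t\<in>I. \<forall>X A. s \<le> t \<and> X \<in> L2 M (F t) \<and> A \<in> sets (F s) \<longrightarrow>
        (AE \<omega> in M. indicator A \<omega> * E s t X \<omega>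
                    = indicator A \<omega> * E s t (\<lambda>\<omega>'. indicator A \<omega>' * X \<omega>') \<omega>))"

end

theory Submission
  imports Defs
begin

lemma nf_space: "space (nat_filtration M B t) = space M"
  unfolding nat_filtration_def by (simp add: space_measure_of_conv)

lemma nf_sets: "sets (nat_filtration M B t) =
   sigma_sets (space M) {B r -` A \<inter> space M | r A. 0 \<le> r \<and> r \<le> t \<and> A \<in> sets borel}"
  unfolding nat_filtration_def by (rule sets_measure_of) auto

lemma nf_mono: "s \<le> t \<Longrightarrow> subalgebra (nat_filtration M B t) (nat_filtration M B s)"
  unfolding subalgebra_def nf_space nf_sets
  by (rule conjI, simp, rule sigma_sets_mono') (auto intro: order_trans)

lemma nf_sub:
  assumes "\<forall>t\<ge>0. B t \<in> borel_measurable M"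
  shows "subalgebra M (nat_filtration M B t)"
  unfolding subalgebra_def nf_space nf_sets
proof (rule conjI, simp, subst sigma_sets_le_sets_iff)
  show "{B r -` A \<inter> space M | r A. 0 \<le> r \<and> r \<le> t \<and> A \<in> sets borel} \<subseteq> sets M"
    using assms measurable_sets by blast
qed

lemma L2_zero: "(\<lambda>_. 0) \<in> L2 M G"
  unfolding L2_def by simp

lemma L2_add:
  assumes sub: "subalgebra M G" and f: "f \<in> L2 M G" and g: "g \<in> L2 M G"
  shows "(\<lambda>\<omega>. f \<omega> + g \<omega>) \<in> L2 M G"
proof -
  have fm: "f \<in> borel_measurable M" and gm: "g \<in> borel_measurable M"
    using f g sub measurable_from_subalg unfolding L2_def by blast+
  have I: "integrable M (\<lambda>\<omega>. 2 * (f \<omega>)\<^sup>2 + 2 * (g \<omega>)\<^sup>2)"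
    using f g unfolding L2_def by auto
  have AE: "AE \<omega> in M. norm ((f \<omega> + g \<omega>)\<^sup>2) \<le> norm (2 * (f \<omega>)\<^sup>2 + 2 * (g \<omega>)\<^sup>2)"
  proof (rule AE_I2)
    fix \<omega>
    have "0 \<le> (f \<omega> - g \<omega>)\<^sup>2" by simp
    moreover have "0 \<le> (f \<omega> + g \<omega>)\<^sup>2" by simp
    ultimately show "norm ((f \<omega> + g \<omega>)\<^sup>2) \<le> norm (2 * (f \<omega>)\<^sup>2 + 2 * (g \<omega>)\<^sup>2)"
      unfolding real_norm_def power2_eq_square by (simp add: algebra_simps)
  qed
  have "integrable M (\<lambda>\<omega>. (f \<omega> + g \<omega>)\<^sup>2)"
    by (rule Bochner_Integration.integrable_bound[OF I _ AE]) (use fm gm in measurable)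
  then show ?thesis using f g unfolding L2_def by auto
qed

lemma L2_uminus:
  assumes f: "f \<in> L2 M G"
  shows "(\<lambda>\<omega>. - f \<omega>) \<in> L2 M G"
  using f unfolding L2_def by auto

lemma L2_ind:
  assumes sub: "subalgebra M G" and f: "f \<in> L2 M G" and A: "A \<in> sets G"
  shows "(\<lambda>\<omega>. indicator A \<omega> * f \<omega>) \<in> L2 M G"
proof -
  have fm: "f \<in> borel_measurable M" 
    using f sub measurable_from_subalg unfolding L2_def by blast
  have AM: "A \<in> sets M" using sub A unfolding subalgebra_def by auto
  have I: "integrable M (\<lambda>\<omega>. (f \<omega>)\<^sup>2)" using f unfolding L2_def by auto
  have AE: "AE \<omega> in M. norm ((indicator A \<omega> * f \<omega>)\<^sup>2) \<le> norm ((f \<omega>)\<^sup>2)"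
    by (rule AE_I2) (simp add: indicator_def)
  have "integrable M (\<lambda>\<omega>. (indicator A \<omega> * f \<omega>)\<^sup>2)"
    by (rule Bochner_Integration.integrable_bound[OF I _ AE]) (use fm AM in measurable)
  moreover have "(\<lambda>\<omega>. indicator A \<omega> * f \<omega>) \<in> borel_measurable G"
  proof -
    have [measurable]: "f \<in> borel_measurable G" using f unfolding L2_def by auto
    show ?thesis using A by measurable
  qed
  ultimately show ?thesis unfolding L2_def by auto
qed

lemma L2_mono:
  assumes "subalgebra H G" "f \<in> L2 M G" shows "f \<in> L2 M H"
  using assms measurable_from_subalg unfolding L2_def by blast

lemma tt_mono:
  assumes "\<forall>i<N. tt i < tt (Suc i)" "a \<le> b" "b \<le> N"
  shows "(tt a :: real) \<le> tt b"
  using assms(2,3)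
proof (induction b)
  case 0 then show ?case by simp
next
  case (Suc b)
  show ?case
  proof (cases "a = Suc b")
    case False
    then have "tt a \<le> tt b" using Suc by auto
    also have "\<dots> \<le> tt (Suc b)" using assms(1) Suc(3) by (simp add: less_imp_le Suc_le_lessD)
    finally show ?thesis .
  qed simp
qed

theorem lemma6p1:
  fixes M :: "'a measure" and B :: "real \<Rightarrow> 'a \<Rightarrow> real ^ 'd"
    and E :: "real \<Rightarrow> real \<Rightarrow> ('a \<Rightarrow> real) \<Rightarrow> 'a \<Rightarrow> real"
    and N :: nat and tt :: "nat \<Rightarrow> real" and \<xi> :: "nat \<Rightarrow> 'a \<Rightarrow> real"
    and K :: "real \<Rightarrow> 'a \<Rightarrow> real"
  assumes BM: "brownian_motion M B"
    and E_cons: "consistent_pricing M (nat_filtration M B) {0..} E"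
    and t0: "0 \<le> tt 0"
    and incr: "\<forall>i<N. tt i < tt (Suc i)"
    and xi: "\<forall>i<N. \<xi> i \<in> L2 M (nat_filtration M B (tt i))"
    and K_def: "\<And>t \<omega>. K t \<omega> = (\<Sum>i<N. \<xi> i \<omega> * indicator {tt i..<tt (Suc i)} t)"
  shows "\<forall>i<N. consistent_pricing M (nat_filtration M B) {tt i..tt (Suc i)}
                 (\<lambda>s t X. E s t (\<lambda>\<omega>. X \<omega> + K t \<omega> - K s \<omega>))"
proof (intro allI impI)
  fix i assume iN: "i < N"
  have Bm: "\<forall>t\<ge>0. B t \<in> borel_measurable M" using BM unfolding brownian_motion_def by auto
  have sub: "\<And>t. subalgebra M (nat_filtration M B t)" using nf_sub[OF Bm] .
  have KL2: "K t \<in> L2 M (nat_filtration M B t)" for t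
  proof -
    have "n \<le> N \<Longrightarrow> (\<lambda>\<omega>. \<Sum>j<n. \<xi> j \<omega> * indicator {tt j..<tt (Suc j)} t) \<in> L2 M (nat_filtration M B t)" for n
    proof (induction n)
      case 0 then show ?case using L2_zero by simp
    next
      case (Suc n)
      have T: "(\<lambda>\<omega>. \<xi> n \<omega> * indicator {tt n..<tt (Suc n)} t) \<in> L2 M (nat_filtration M B t)"
      proof (cases "t \<in> {tt n..<tt (Suc n)}")
        case True
        then have "\<xi> n \<in> L2 M (nat_filtration M B t)"
          using L2_mono[OF nf_mono[of "tt n" t M B]] xi Suc(2) by auto
        then show ?thesis using True by simp
      next
        case False then show ?thesis using L2_zero by simp
      qed
      show ?case using L2_add[OF sub Suc.IH[OF Suc_leD[OF Suc(2)]] T] by simp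
    qed
    then show ?thesis using K_def[abs_def] by simp
  qed
  have Kconst: "K r = K s" if "tt i \<le> r" "r \<le> s" "s < tt (Suc i)" for r s
  proof -
    have "indicator {tt j..<tt (Suc j)} r = (indicator {tt j..<tt (Suc j)} s :: real)" if "j < N" for j
    proof -
      consider "j < i" | "j = i" | "i < j" by arith
      then show ?thesis
      proof cases
        case 1
        have "tt (Suc j) \<le> tt i" using tt_mono[OF incr, of "Suc j" i] 1 iN by auto
        then show ?thesis using \<open>tt i \<le> r\<close> \<open>r \<le> s\<close> by (simp add: indicator_def)
      next
        case 2 then show ?thesis using that \<open>tt i \<le> r\<close> \<open>r \<le> s\<close> \<open>s < tt (Suc i)\<close> by (simp add: indicator_def)
      next
        case 3
        have "tt (Suc i) \<le> tt j" using tt_mono[OF incr, of "Suc i" j] 3 that by auto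
        then show ?thesis using \<open>s < tt (Suc i)\<close> \<open>r \<le> s\<close> by (simp add: indicator_def)
      qed
    qed
    then show ?thesis unfolding K_def[abs_def] by (intro ext sum.cong) auto
  qed
  have a0: "0 \<le> tt i" using tt_mono[OF incr, of 0 i] iN t0 by auto
  have ab: "tt i < tt (Suc i)" using incr iN by auto
  have L2E: "\<And>s t X. 0 \<le> s \<Longrightarrow> s \<le> t \<Longrightarrow> X \<in> L2 M (nat_filtration M B t) \<Longrightarrow> E s t X \<in> L2 M (nat_filtration M B s)"
    using E_cons unfolding consistent_pricing_def Ball_def atLeast_iff by (meson order_trans)
  have monoE: "\<And>s t X X'. 0 \<le> s \<Longrightarrow> s \<le> t \<Longrightarrow> X \<in> L2 M (nat_filtration M B t) \<Longrightarrow> X' \<in> L2 M (nat_filtration M B t) \<Longrightarrow>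
        (AE \<omega> in M. X \<omega> \<ge> X' \<omega>) \<Longrightarrow> (AE \<omega> in M. E s t X \<omega> \<ge> E s t X' \<omega>)"
    using E_cons unfolding consistent_pricing_def Ball_def atLeast_iff by (meson order_trans)
  have idE: "\<And>t X. 0 \<le> t \<Longrightarrow> X \<in> L2 M (nat_filtration M B t) \<Longrightarrow> (AE \<omega> in M. E t t X \<omega> = X \<omega>)"
    using E_cons unfolding consistent_pricing_def Ball_def atLeast_iff by (meson order_trans)
  have compE: "\<And>r s t X. 0 \<le> r \<Longrightarrow> r \<le> s \<Longrightarrow> s \<le> t \<Longrightarrow> X \<in> L2 M (nat_filtration M B t) \<Longrightarrow>
        (AE \<omega> in M. E r s (E s t X) \<omega> = E r t X \<omega>)"
    using E_cons unfolding consistent_pricing_def Ball_def atLeast_iff by (meson order_trans)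
  have locE: "\<And>s t X A. 0 \<le> s \<Longrightarrow> s \<le> t \<Longrightarrow> X \<in> L2 M (nat_filtration M B t) \<Longrightarrow> A \<in> sets (nat_filtration M B s) \<Longrightarrow>
        (AE \<omega> in M. indicator A \<omega> * E s t X \<omega>
                    = indicator A \<omega> * E s t (\<lambda>\<omega>'. indicator A \<omega>' * X \<omega>') \<omega>)"
    using E_cons unfolding consistent_pricing_def Ball_def atLeast_iff by (meson order_trans)
  have Eae: "AE \<omega> in M. E s t X \<omega> = E s t X' \<omega>"
    if "0 \<le> s" "s \<le> t" "X \<in> L2 M (nat_filtration M B t)" "X' \<in> L2 M (nat_filtration M B t)"
       "AE \<omega> in M. X \<omega> = X' \<omega>" for s t X X'
  proof -
    have "AE \<omega> in M. E s t X \<omega> \<ge> E s t X' \<omega>"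
      using that by (intro monoE) (auto elim: AE_mp)
    moreover have "AE \<omega> in M. E s t X' \<omega> \<ge> E s t X \<omega>"
      using that by (intro monoE) (auto elim: AE_mp)
    ultimately show ?thesis by eventually_elim simp
  qed
  have Ymem: "(\<lambda>\<omega>. X \<omega> + K t \<omega> - K s \<omega>) \<in> L2 M (nat_filtration M B t)"
    if "s \<le> t" "X \<in> L2 M (nat_filtration M B t)" for s t X
  proof -
    have "K s \<in> L2 M (nat_filtration M B t)" using L2_mono[OF nf_mono KL2] that by blast
    then show ?thesis
      using L2_add[OF sub L2_add[OF sub that(2) KL2] L2_uminus] by simp
  qed
  show "consistent_pricing M (nat_filtration M B) {tt i..tt (Suc i)}
                 (\<lambda>s t X. E s t (\<lambda>\<omega>. X \<omega> + K t \<omega> - K s \<omega>))"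
    unfolding consistent_pricing_def
  proof (intro conjI ballI allI impI)
    fix s t X assume s: "s \<in> {tt i..tt (Suc i)}" and t: "t \<in> {tt i..tt (Suc i)}"
      and h: "s \<le> t \<and> X \<in> L2 M (nat_filtration M B t)"
    show "E s t (\<lambda>\<omega>. X \<omega> + K t \<omega> - K s \<omega>) \<in> L2 M (nat_filtration M B s)"
      using L2E[OF _ _ Ymem] s a0 h by auto
  next
    fix s t X X' assume s: "s \<in> {tt i..tt (Suc i)}" and t: "t \<in> {tt i..tt (Suc i)}"
      and h: "s \<le> t \<and> X \<in> L2 M (nat_filtration M B t) \<and> X' \<in> L2 M (nat_filtration M B t) \<and>
        (AE \<omega> in M. X \<omega> \<ge> X' \<omega>)"
    show "AE \<omega> in M. E s t (\<lambda>\<omega>. X' \<omega> + K t \<omega> - K s \<omega>) \<omega> \<le> E s t (\<lambda>\<omega>. X \<omega> + K t \<omega> - K s \<omega>) \<omega>"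
      using h s a0 by (intro monoE Ymem) (auto elim: AE_mp)
  next
    fix t X assume t: "t \<in> {tt i..tt (Suc i)}" and h: "X \<in> L2 M (nat_filtration M B t)"
    show "AE \<omega> in M. E t t (\<lambda>\<omega>. X \<omega> + K t \<omega> - K t \<omega>) \<omega> = X \<omega>"
      using idE[OF _ h] t a0 by simp
  next
    fix r s t X assume r: "r \<in> {tt i..tt (Suc i)}" and s: "s \<in> {tt i..tt (Suc i)}" and t: "t \<in> {tt i..tt (Suc i)}"
      and h: "r \<le> s \<and> s \<le> t \<and> X \<in> L2 M (nat_filtration M B t)"
    have r0: "0 \<le> r" using r a0 by auto
    show "AE \<omega> in M. E r s (\<lambda>\<omega>. E s t (\<lambda>\<omega>. X \<omega> + K t \<omega> - K s \<omega>) \<omega> + K s \<omega> - K r \<omega>) \<omega>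
                    = E r t (\<lambda>\<omega>. X \<omega> + K t \<omega> - K r \<omega>) \<omega>"
    proof (cases "s < tt (Suc i)")
      case True
      have "K r = K s" using Kconst r h True by auto
      then show ?thesis using compE[OF r0 _ _ Ymem] h by simp
    next
      case False
      then have st: "s = tt (Suc i)" "t = s" using s t h by auto
      have X: "X \<in> L2 M (nat_filtration M B s)" using h st by simp
      have s0: "0 \<le> s" using r0 h by auto
      have "AE \<omega> in M. E r s (\<lambda>\<omega>. E s s X \<omega> + K s \<omega> - K r \<omega>) \<omega> = E r s (\<lambda>\<omega>. X \<omega> + K s \<omega> - K r \<omega>) \<omega>"
        using idE[OF s0 X] h by (intro Eae Ymem L2E[OF s0 _ X] r0 X) (auto elim: AE_mp)
      then show ?thesis using st by simp
    qed
  next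
    fix s t X A assume s: "s \<in> {tt i..tt (Suc i)}" and t: "t \<in> {tt i..tt (Suc i)}"
      and h: "s \<le> t \<and> X \<in> L2 M (nat_filtration M B t) \<and> A \<in> sets (nat_filtration M B s)"
    have s0: "0 \<le> s" using s a0 by auto
    have At: "A \<in> sets (nat_filtration M B t)" using h nf_mono[of s t M B] unfolding subalgebra_def by auto
    have XA: "(\<lambda>\<omega>. indicator A \<omega> * X \<omega>) \<in> L2 M (nat_filtration M B t)"
      using L2_ind[OF sub _ At] h by blast
    have eq: "(\<lambda>\<omega>'. indicator A \<omega>' * (indicator A \<omega>' * X \<omega>' + K t \<omega>' - K s \<omega>'))
       = (\<lambda>\<omega>'. indicator A \<omega>' * (X \<omega>' + K t \<omega>' - K s \<omega>'))"
      by (auto simp: indicator_def)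
    have 1: "AE \<omega> in M. indicator A \<omega> * E s t (\<lambda>\<omega>. X \<omega> + K t \<omega> - K s \<omega>) \<omega>
       = indicator A \<omega> * E s t (\<lambda>\<omega>'. indicator A \<omega>' * (X \<omega>' + K t \<omega>' - K s \<omega>')) \<omega>"
      using locE[OF s0 _ Ymem] h by blast
    have 2: "AE \<omega> in M. indicator A \<omega> * E s t (\<lambda>\<omega>. indicator A \<omega> * X \<omega> + K t \<omega> - K s \<omega>) \<omega>
       = indicator A \<omega> * E s t (\<lambda>\<omega>'. indicator A \<omega>' * (indicator A \<omega>' * X \<omega>' + K t \<omega>' - K s \<omega>')) \<omega>"
      using locE[OF s0 _ Ymem[OF _ XA]] h by blast
    show "AE \<omega> in M. indicator A \<omega> * E s t (\<lambda>\<omega>. X \<omega> + K t \<omega> - K s \<omega>) \<omega> =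
          indicator A \<omega> * E s t (\<lambda>\<omega>. indicator A \<omega> * X \<omega> + K t \<omega> - K s \<omega>) \<omega>"
      using 1 2 unfolding eq by eventually_elim (rule trans, assumption, rule sym)
  qed
qed

end
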